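(* Consider the $k$-means++ seeding algorithm on a finite set $\mathbf{X}\subset\mathbb{R}^d$ with a fixed optimal $k$-clustering $P_1,\dots,P_k$. Then for every $t\ge1$, $$\mathbb{E}\big[\widetilde{H}_{t+1}(\mathbf{X})\mid C_t\big]\le\widetilde{H}_t(\mathbf{X}).$$ In particular $\mathbb{E}[\mathrm{cost}(P_i,C_t)\mathbf{1}\{P_i\cap C_t\ne\varnothing\}]$ summed over $i$ is at most $5\,\mathrm{OPT}_k(\mathbf{X})$ for every $t$.
   Context: For a finite set $C\subset\mathbb{R}^d$ and a point $x$, $\mathrm{cost}(x,C)=\min_{c\in C}\|x-c\|^2$; $\mathrm{cost}(\mathbf{Y},C)=\sum_{x\in\mathbf{Y}}\mathrm{cost}(x,C)$; $\mathrm{OPT}_i(\mathbf{Y})=\min_{|C|=i}\mathrm{cost}(\mathbf{Y},C)$. The $k$-means++ seeding algorithm: $c_1$ uniform from $\mathbf{X}$, $C_1=\{c_1\}$; $C_{t+1}=C_t\cup\{x\}$ with $x$ chosen with probability $\mathrm{cost}(x,C_t)/\mathrm{cost}(\mathbf{X},C_t)$. Fix an optimal $k$-means clustering $P_1,\dots,P_k$ of $\mathbf{X}$ (a partition induced by an optimal center set, so $\mathrm{OPT}_k(\mathbf{X})=\sum_i\mathrm{OPT}_1(P_i)$). $P_i$ is covered by $C$ if $C\cap P_i\neq\varnothing$. Define $\widetilde H_t(P_i)=\mathrm{cost}(P_i,C_{t_i})$ if $P_i$ is covered by $C_t$, where $t_i\le t$ is the first time $P_i$ is covered, and $\widetilde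 H_t(P_i)=5\,\mathrm{OPT}_1(P_i)$ otherwise; $\widetilde H_t(\mathbf{X})=\sum_{i=1}^k\widetilde H_t(P_i)$. *)

theory Defs
  imports "HOL-Analysis.Analysis" "HOL-Probability.Probability"
begin

definition cost :: "'a::euclidean_space \<Rightarrow> 'a set \<Rightarrow> real" where
  "cost x C = (MIN c\<in>C. (norm (x - c))\<^sup>2)"

definition cost_set :: "'a::euclidean_space set \<Rightarrow> 'a set \<Rightarrow> real" where
  "cost_set Y C = (\<Sum>x\<in>Y. cost x C)"

definition OPT :: "nat \<Rightarrow> 'a::euclidean_space set \<Rightarrow> real" where
  "OPT i Y = (INF C \<in> {C. finite C \<and> card C = i}. cost_set Y C)"

text \<open>P 0, ..., P (k-1) is an optimal k-means clustering of X: a partition of X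
  induced by an optimal center set (each point of P i has center c i as a nearest center).\<close>
definition opt_clustering :: "'a::euclidean_space set \<Rightarrow> nat \<Rightarrow> (nat \<Rightarrow> 'a set) \<Rightarrow> bool" where
  "opt_clustering X k P \<longleftrightarrow>
     (\<forall>i<k. \<forall>j<k. i \<noteq> j \<longrightarrow> P i \<inter> P j = {}) \<and>
     (\<Union>i<k. P i) = X \<and>
     (\<exists>c. inj_on c {..<k} \<and> cost_set X (c ` {..<k}) = OPT k X \<and>
          (\<forall>i<k. \<forall>x\<in>P i. (norm (x - c i))\<^sup>2 = cost x (c ` {..<k})))"

text \<open>D^2 sampling: x chosen with probability cost(x,C)/cost(X,C).
  Convention for the degenerate case cost(X,C) = 0 (where D^2 sampling is undefined):
  choose uniformly from X.\<close>
definition d2_sample :: "'a::euclidean_space set \<Rightarrow> 'a set \<Rightarrow> 'a pmf" where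
  "d2_sample X C =
     (if cost_set X C = 0 then pmf_of_set X
      else embed_pmf (\<lambda>x. if x \<in> X then cost x C / cost_set X C else 0))"

text \<open>One k-means++ step on a history h = [c_1,...,c_t] (C_t = set h).\<close>
definition kmpp_step :: "'a::euclidean_space set \<Rightarrow> 'a list \<Rightarrow> 'a list pmf" where
  "kmpp_step X h = map_pmf (\<lambda>x. h @ [x]) (d2_sample X (set h))"

fun kmpp :: "'a::euclidean_space set \<Rightarrow> nat \<Rightarrow> 'a list pmf" where
  "kmpp X 0 = return_pmf []"
| "kmpp X (Suc 0) = map_pmf (\<lambda>c. [c]) (pmf_of_set X)"
| "kmpp X (Suc (Suc n)) = bind_pmf (kmpp X (Suc n)) (kmpp_step X)"

text \<open>Htilde_t(A) for the history h (t = length h): the cost of A w.r.t. C_{t_A},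
  where t_A is the first time A is covered, or 5 OPT_1(A) if A is not covered.\<close>
definition Htilde_cluster :: "'a::euclidean_space list \<Rightarrow> 'a set \<Rightarrow> real" where
  "Htilde_cluster h A =
     (if A \<inter> set h \<noteq> {}
      then cost_set A (set (take (LEAST j. A \<inter> set (take j h) \<noteq> {}) h))
      else 5 * OPT 1 A)"

definition Htilde :: "nat \<Rightarrow> (nat \<Rightarrow> 'a::euclidean_space set) \<Rightarrow> 'a list \<Rightarrow> real" where
  "Htilde k P h = (\<Sum>i<k. Htilde_cluster h (P i))"

end

theory Submission
  imports Defs
begin


lemma cost_fin_ne:
  assumes "finite C" "C \<noteq> {}"
  shows "\<exists>y\<in>C. cost x C = (norm (x - y))\<^sup>2"
proof -
  have "finite ((\<lambda>c. (norm (x - c))\<^sup>2) ` C)" "(\<lambda>c. (norm (x - c))\<^sup>2) ` C \<noteq> {}" using assms by auto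
  from Min_in[OF this] show ?thesis unfolding cost_def by auto
qed

lemma cost_le: "finite C \<Longrightarrow> y \<in> C \<Longrightarrow> cost x C \<le> (norm (x - y))\<^sup>2"
  unfolding cost_def by (rule Min_le) auto

lemma cost_nonneg: "finite C \<Longrightarrow> C \<noteq> {} \<Longrightarrow> 0 \<le> cost x C"
  using cost_fin_ne[of C x] by auto

lemma cost_singleton: "cost x {z} = (norm (x - z))\<^sup>2"
  unfolding cost_def by simp

lemma cost_insert: "finite C \<Longrightarrow> C \<noteq> {} \<Longrightarrow> cost x (insert z C) = min ((norm (x - z))\<^sup>2) (cost x C)"
  unfolding cost_def by (simp add: image_insert Min_insert)

lemma cost_zero: "finite C \<Longrightarrow> C \<noteq> {} \<Longrightarrow> cost x C = 0 \<Longrightarrow> x \<in> C"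
  using cost_fin_ne[of C x] by auto

lemma cost_mono: "finite C' \<Longrightarrow> C \<subseteq> C' \<Longrightarrow> C \<noteq> {} \<Longrightarrow> cost x C' \<le> cost x C"
  unfolding cost_def by (rule Min_antimono) auto

lemma cost_set_mono: "finite C' \<Longrightarrow> C \<subseteq> C' \<Longrightarrow> C \<noteq> {} \<Longrightarrow> cost_set A C' \<le> cost_set A C"
  unfolding cost_set_def by (rule sum_mono) (rule cost_mono)

lemma cost_set_nonneg: "finite C \<Longrightarrow> C \<noteq> {} \<Longrightarrow> 0 \<le> cost_set A C"
  unfolding cost_set_def by (rule sum_nonneg) (rule cost_nonneg)

lemma cost_lip:
  assumes "finite C" "C \<noteq> {}"
  shows "sqrt (cost c C) \<le> sqrt (cost x C) + norm (x - c)"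
proof -
  obtain y where y: "y \<in> C" "cost x C = (norm (x - y))\<^sup>2" using cost_fin_ne[OF assms] by blast
  have "cost c C \<le> (norm (c - y))\<^sup>2" using cost_le[OF assms(1) y(1)] .
  also have "norm (c - y) \<le> norm (x - c) + norm (x - y)"
    using norm_triangle_ineq4[of "x - y" "x - c"] by (simp add: algebra_simps)
  hence "(norm (c - y))\<^sup>2 \<le> (norm (x - c) + norm (x - y))\<^sup>2"
    by (intro power_mono) auto
  finally have "sqrt (cost c C) \<le> sqrt ((norm (x - c) + norm (x - y))\<^sup>2)" by (rule real_sqrt_le_mono)
  also have "\<dots> = norm (x - c) + norm (x - y)" by simp
  finally show ?thesis using y by simp
qed



definition centroid :: "'a::euclidean_space set \<Rightarrow> 'a" where
  "centroid A = inverse (real (card A)) *\<^sub>R (\<Sum>x\<in>A. x)"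

lemma sum_diff_centroid:
  assumes "finite A" "A \<noteq> {}"
  shows "(\<Sum>x\<in>A. x - centroid A) = 0"
proof -
  have "card A > 0" using assms by (simp add: card_gt_0_iff)
  have "(\<Sum>x\<in>A. x - centroid A) = (\<Sum>x\<in>A. x) - real (card A) *\<^sub>R centroid A"
    by (simp add: sum_subtractf sum_constant_scaleR)
  also have "real (card A) *\<^sub>R centroid A = (\<Sum>x\<in>A. x)"
    using \<open>card A > 0\<close> by (simp add: centroid_def)
  finally show ?thesis by simp
qed

lemma norm_add_sq:
  fixes a b :: "'a::euclidean_space"
  shows "(norm (a + b))\<^sup>2 = (norm a)\<^sup>2 + 2 * (a \<bullet> b) + (norm b)\<^sup>2"
  by (simp add: power2_norm_eq_inner inner_add_left inner_add_right inner_commute)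

lemma sq_dist_expand:
  fixes x c m :: "'a::euclidean_space"
  shows "(norm (x - c))\<^sup>2 = (norm (x - m))\<^sup>2 + 2 * ((x - m) \<bullet> (m - c)) + (norm (c - m))\<^sup>2"
proof -
  have "x - c = (x - m) + (m - c)" by simp
  hence "(norm (x - c))\<^sup>2 = (norm ((x - m) + (m - c)))\<^sup>2" by metis
  also have "\<dots> = (norm (x - m))\<^sup>2 + 2 * ((x - m) \<bullet> (m - c)) + (norm (m - c))\<^sup>2"
    by (rule norm_add_sq)
  also have "norm (m - c) = norm (c - m)" by (rule norm_minus_commute)
  finally show ?thesis .
qed

lemma sum_sq_dist_centroid:
  assumes "finite A" "A \<noteq> {}"
  shows "(\<Sum>x\<in>A. (norm (x - c))\<^sup>2) = (\<Sum>x\<in>A. (norm (x - centroid A))\<^sup>2) + real (card A) * (norm (c - centroid A))\<^sup>2"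
proof -
  let ?m = "centroid A"
  have "(\<Sum>x\<in>A. (norm (x - c))\<^sup>2) = (\<Sum>x\<in>A. (norm (x - ?m))\<^sup>2 + 2 * ((x - ?m) \<bullet> (?m - c)) + (norm (c - ?m))\<^sup>2)"
    by (rule sum.cong) (auto intro: sq_dist_expand)
  also have "\<dots> = (\<Sum>x\<in>A. (norm (x - ?m))\<^sup>2) + 2 * (\<Sum>x\<in>A. (x - ?m) \<bullet> (?m - c)) + real (card A) * (norm (c - ?m))\<^sup>2"
    by (simp add: sum.distrib sum_distrib_left)
  also have "(\<Sum>x\<in>A. (x - ?m) \<bullet> (?m - c)) = (\<Sum>x\<in>A. x - ?m) \<bullet> (?m - c)"
    by (simp add: inner_sum_left)
  also have "\<dots> = 0" using sum_diff_centroid[OF assms] by simp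
  finally show ?thesis by simp
qed

lemma cost_set_singleton: "cost_set A {z} = (\<Sum>x\<in>A. (norm (x - z))\<^sup>2)"
  unfolding cost_set_def by (simp add: cost_singleton)

lemma OPT1_ge:
  fixes A :: "'a::euclidean_space set"
  assumes "\<And>z. r \<le> cost_set A {z}"
  shows "r \<le> OPT 1 A"
  unfolding OPT_def
proof (rule cINF_greatest)
  show "{C. finite C \<and> card C = 1} \<noteq> {}" by (auto intro!: exI[of _ "{0}"])
  fix C :: "'a set" assume "C \<in> {C. finite C \<and> card C = (1::nat)}"
  then obtain z where "C = {z}" by (auto simp: card_1_singleton_iff)
  thus "r \<le> cost_set A C" using assms by simp
qed

lemma OPT1_nonneg: "0 \<le> OPT 1 A"
  by (rule OPT1_ge) (simp add: cost_set_singleton sum_nonneg)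

lemma centroid_le_OPT1:
  assumes "finite A"
  shows "(\<Sum>x\<in>A. (norm (x - centroid A))\<^sup>2) \<le> OPT 1 A"
proof (cases "A = {}")
  case True thus ?thesis using OPT1_nonneg[of A] by simp
next
  case False
  show ?thesis
  proof (rule OPT1_ge)
    fix z
    show "(\<Sum>x\<in>A. (norm (x - centroid A))\<^sup>2) \<le> cost_set A {z}"
      unfolding cost_set_singleton sum_sq_dist_centroid[OF assms False, of z] by simp
  qed
qed



lemma per_point:
  fixes n D S R r :: real
  assumes n: "n > 0" and D: "D \<ge> 0" and S: "S \<ge> 0" and R: "R \<ge> 0" and r: "r \<ge> 0"
    and H: "n * n * D \<le> (sqrt (n * S) + sqrt (n * (R + n * r)))\<^sup>2"
  shows "D * min S (R + n * r) \<le> R * D + 4 * S * r"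
proof (cases "R + n * r \<le> S")
  case True
  have "sqrt (n * (R + n * r)) \<le> sqrt (n * S)"
    using True n by (intro real_sqrt_le_mono mult_left_mono) auto
  moreover have "0 \<le> sqrt (n * S) + sqrt (n * (R + n * r))" using n S R r by simp
  ultimately have "(sqrt (n * S) + sqrt (n * (R + n * r)))\<^sup>2 \<le> (2 * sqrt (n * S))\<^sup>2"
    by (intro power_mono) auto
  also have "\<dots> = 4 * (n * S)" using n S by (simp add: power_mult_distrib)
  finally have "n * (n * D) \<le> n * (4 * S)" using H by (simp add: algebra_simps)
  hence nD: "n * D \<le> 4 * S" using n by simp
  have "D * min S (R + n * r) = R * D + (n * D) * r" using True by (simp add: algebra_simps)
  also have "\<dots> \<le> R * D + (4 * S) * r" using nD r by (intro add_left_mono mult_right_mono) auto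
  finally show ?thesis by simp
next
  case False
  let ?G = "R + n * r"
  have G0: "?G \<ge> 0" using R n r by simp
  have "sqrt (n * S) \<le> sqrt (n * ?G)"
    using False n by (intro real_sqrt_le_mono mult_left_mono) auto
  moreover have "0 \<le> sqrt (n * S) + sqrt (n * ?G)" using n S R r by simp
  ultimately have "(sqrt (n * S) + sqrt (n * ?G))\<^sup>2 \<le> (2 * sqrt (n * ?G))\<^sup>2"
    by (intro power_mono) auto
  also have "\<dots> = 4 * (n * ?G)" using n G0 by (simp add: power_mult_distrib)
  finally have "n * (n * D) \<le> n * (4 * ?G)" using H by (simp add: algebra_simps)
  hence nD: "n * D \<le> 4 * ?G" using n by simp
  have mn: "min S ?G = S" using False by simp
  show ?thesis
  proof (cases "S \<le> R")
    case True
    have "D * S \<le> D * R" using True D by (intro mult_left_mono) auto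
    moreover have "0 \<le> 4 * S * r" using S r by simp
    ultimately show ?thesis unfolding mn by (simp add: algebra_simps)
  next
    case SR: False
    have "n * (D * (S - R)) = (n * D) * (S - R)" by simp
    also have "\<dots> \<le> (4 * ?G) * (S - R)" using nD SR by (intro mult_right_mono) auto
    also have "\<dots> \<le> n * (4 * S * r)"
    proof -
      have "R * (S - ?G) \<le> 0" using False R by (intro mult_nonneg_nonpos) auto
      thus ?thesis by (simp add: algebra_simps)
    qed
    finally have "D * (S - R) \<le> 4 * S * r" using n by simp
    thus ?thesis unfolding mn by (simp add: algebra_simps)
  qed
qed

lemma sum_le_sqrt_card:
  fixes f :: "'b \<Rightarrow> real"
  assumes "finite A" "\<And>x. x \<in> A \<Longrightarrow> f x \<ge> 0"
  shows "(\<Sum>x\<in>A. f x) \<le> sqrt (real (card A) * (\<Sum>x\<in>A. (f x)\<^sup>2))"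
proof -
  have "(\<Sum>x\<in>A. 1 * f x)\<^sup>2 \<le> (\<Sum>x\<in>A. 1\<^sup>2) * (\<Sum>x\<in>A. (f x)\<^sup>2)"
    by (rule Cauchy_Schwarz_ineq_sum)
  hence "(\<Sum>x\<in>A. f x)\<^sup>2 \<le> real (card A) * (\<Sum>x\<in>A. (f x)\<^sup>2)" by simp
  hence "sqrt ((\<Sum>x\<in>A. f x)\<^sup>2) \<le> sqrt (real (card A) * (\<Sum>x\<in>A. (f x)\<^sup>2))"
    by (rule real_sqrt_le_mono)
  moreover have "(\<Sum>x\<in>A. f x) \<ge> 0" using assms by (intro sum_nonneg) auto
  ultimately show ?thesis by simp
qed

lemma key_lemma:
  fixes A C :: "'a::euclidean_space set"
  assumes A: "finite A" and C: "finite C" "C \<noteq> {}"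
  shows "(\<Sum>c\<in>A. cost c C * cost_set A (insert c C)) \<le> 5 * OPT 1 A * (\<Sum>c\<in>A. cost c C)"
proof (cases "A = {}")
  case True thus ?thesis by simp
next
  case Ane: False
  define n where "n = real (card A)"
  define S where "S = (\<Sum>c\<in>A. cost c C)"
  define m where "m = centroid A"
  define R where "R = (\<Sum>x\<in>A. (norm (x - m))\<^sup>2)"
  have n: "n > 0" using A Ane by (simp add: n_def card_gt_0_iff)
  have Dnn: "\<And>x. cost x C \<ge> 0" using cost_nonneg[OF C] .
  have S0: "S \<ge> 0" unfolding S_def using Dnn by (simp add: sum_nonneg)
  have R0: "R \<ge> 0" unfolding R_def by (simp add: sum_nonneg)
  have G: "\<And>c. (\<Sum>x\<in>A. (norm (x - c))\<^sup>2) = R + n * (norm (c - m))\<^sup>2"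
    unfolding R_def n_def m_def by (rule sum_sq_dist_centroid[OF A Ane])
  have pt: "cost c C * cost_set A (insert c C) \<le> R * cost c C + 4 * S * (norm (c - m))\<^sup>2"
    if c: "c \<in> A" for c
  proof -
    have f1: "cost_set A (insert c C) \<le> S"
      unfolding cost_set_def S_def using C by (intro sum_mono) (simp add: cost_insert)
    have f2: "cost_set A (insert c C) \<le> R + n * (norm (c - m))\<^sup>2"
      unfolding cost_set_def G[symmetric] using C by (intro sum_mono) (simp add: cost_insert)
    have lip: "n * sqrt (cost c C) \<le> (\<Sum>x\<in>A. sqrt (cost x C)) + (\<Sum>x\<in>A. norm (x - c))"
    proof -
      have "n * sqrt (cost c C) = (\<Sum>x\<in>A. sqrt (cost c C))" by (simp add: n_def)
      also have "\<dots> \<le> (\<Sum>x\<in>A. sqrt (cost x C) + norm (x - c))"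
        by (intro sum_mono cost_lip[OF C])
      finally show ?thesis by (simp add: sum.distrib)
    qed
    have s1: "(\<Sum>x\<in>A. sqrt (cost x C)) \<le> sqrt (n * S)"
      using sum_le_sqrt_card[OF A, of "\<lambda>x. sqrt (cost x C)"] Dnn by (simp add: n_def S_def)
    have s2: "(\<Sum>x\<in>A. norm (x - c)) \<le> sqrt (n * (R + n * (norm (c - m))\<^sup>2))"
      using sum_le_sqrt_card[OF A, of "\<lambda>x. norm (x - c)"] G[of c] by (simp add: n_def)
    have "n * sqrt (cost c C) \<le> sqrt (n * S) + sqrt (n * (R + n * (norm (c - m))\<^sup>2))"
      using lip s1 s2 by linarith
    hence "(n * sqrt (cost c C))\<^sup>2 \<le> (sqrt (n * S) + sqrt (n * (R + n * (norm (c - m))\<^sup>2)))\<^sup>2"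
      using n Dnn[of c] by (intro power_mono) auto
    moreover have "(n * sqrt (cost c C))\<^sup>2 = n\<^sup>2 * cost c C"
      using Dnn[of c] by (simp add: power_mult_distrib)
    ultimately have H: "n * n * cost c C \<le> (sqrt (n * S) + sqrt (n * (R + n * (norm (c - m))\<^sup>2)))\<^sup>2"
      by (simp add: power2_eq_square[of n])
    have "cost c C * cost_set A (insert c C) \<le> cost c C * min S (R + n * (norm (c - m))\<^sup>2)"
      using f1 f2 Dnn[of c] by (intro mult_left_mono) auto
    also have "\<dots> \<le> R * cost c C + 4 * S * (norm (c - m))\<^sup>2"
      by (rule per_point[OF n Dnn S0 R0]) (use H in auto)
    finally show ?thesis .
  qed
  have "(\<Sum>c\<in>A. cost c C * cost_set A (insert c C)) \<le> (\<Sum>c\<in>A. R * cost c C + 4 * S * (norm (c - m))\<^sup>2)"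
    by (rule sum_mono) (rule pt)
  also have "\<dots> = R * S + 4 * S * R"
    by (simp add: sum.distrib sum_distrib_left S_def R_def norm_minus_commute)
  also have "\<dots> = 5 * R * S" by simp
  also have "\<dots> \<le> 5 * OPT 1 A * S"
    using centroid_le_OPT1[OF A] S0 by (simp add: R_def m_def mult_right_mono)
  finally show ?thesis by (simp add: S_def)
qed



lemma Htilde_cluster_snoc:
  "Htilde_cluster (h @ [x]) A =
    (if A \<inter> set h = {} \<and> x \<in> A then cost_set A (insert x (set h)) else Htilde_cluster h A)"
proof (cases "A \<inter> set h = {}")
  case False
  let ?P = "\<lambda>j. A \<inter> set (take j h) \<noteq> {}"
  let ?Q = "\<lambda>j. A \<inter> set (take j (h @ [x])) \<noteq> {}"
  have Pl: "?P (length h)" using False by simp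
  define L where "L = (LEAST j. ?P j)"
  have PL: "?P L" unfolding L_def by (rule LeastI[of ?P, OF Pl])
  have Lle: "L \<le> length h" unfolding L_def by (rule Least_le[of ?P, OF Pl])
  have tk: "j \<le> length h \<Longrightarrow> take j (h @ [x]) = take j h" for j by simp
  have "(LEAST j. ?Q j) = L"
  proof (rule Least_equality)
    show "?Q L" using PL tk[OF Lle] by simp
  next
    fix j assume Qj: "?Q j"
    show "L \<le> j"
    proof (rule ccontr)
      assume "\<not> L \<le> j"
      hence "j < L" by simp
      hence "\<not> ?P j" unfolding L_def by (rule not_less_Least)
      moreover have "j \<le> length h" using \<open>j < L\<close> Lle by simp
      ultimately show False using Qj tk by simp
    qed
  qed
  moreover have "A \<inter> set (h @ [x]) \<noteq> {}" using False by auto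
  ultimately show ?thesis using False tk[OF Lle] by (simp add: Htilde_cluster_def L_def)
next
  case True
  show ?thesis
  proof (cases "x \<in> A")
    case xA: True
    let ?Q = "\<lambda>j. A \<inter> set (take j (h @ [x])) \<noteq> {}"
    have "(LEAST j. ?Q j) = Suc (length h)"
    proof (rule Least_equality)
      show "?Q (Suc (length h))" using xA by simp
    next
      fix j assume Qj: "?Q j"
      show "Suc (length h) \<le> j"
      proof (rule ccontr)
        assume "\<not> Suc (length h) \<le> j"
        hence "j \<le> length h" by simp
        hence "take j (h @ [x]) = take j h" by simp
        hence "set (take j (h @ [x])) \<subseteq> set h" using set_take_subset by metis
        thus False using Qj True by blast
      qed
    qed
    moreover have "A \<inter> set (h @ [x]) \<noteq> {}" using xA by auto
    ultimately show ?thesis using True xA by (simp add: Htilde_cluster_def)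
  next
    case xA: False
    have "A \<inter> set (h @ [x]) = {}" using True xA by auto
    thus ?thesis using True xA by (simp add: Htilde_cluster_def)
  qed
qed

lemma Htilde_cluster_covered_ge:
  assumes "A \<inter> set h \<noteq> {}"
  shows "cost_set A (set h) \<le> Htilde_cluster h A"
proof -
  let ?P = "\<lambda>j. A \<inter> set (take j h) \<noteq> {}"
  have Pl: "?P (length h)" using assms by simp
  have PL: "?P (LEAST j. ?P j)" by (rule LeastI[of ?P, OF Pl])
  have ne: "set (take (LEAST j. ?P j) h) \<noteq> {}" using PL by (metis inf_bot_right)
  have "cost_set A (set h) \<le> cost_set A (set (take (LEAST j. ?P j) h))"
    by (rule cost_set_mono[OF finite_set set_take_subset ne])
  thus ?thesis using assms by (simp add: Htilde_cluster_def)
qed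

lemma Htilde_cluster_nonneg: "0 \<le> Htilde_cluster h A"
proof -
  let ?P = "\<lambda>j. A \<inter> set (take j h) \<noteq> {}"
  show ?thesis
  proof (cases "A \<inter> set h = {}")
    case True thus ?thesis using OPT1_nonneg[of A] by (simp add: Htilde_cluster_def)
  next
    case False
    have Pl: "?P (length h)" using False by simp
    have PL: "?P (LEAST j. ?P j)" by (rule LeastI[of ?P, OF Pl])
    have ne: "set (take (LEAST j. ?P j) h) \<noteq> {}" using PL by (metis inf_bot_right)
    thus ?thesis using False cost_set_nonneg[OF finite_set ne] by (simp add: Htilde_cluster_def)
  qed
qed



lemma d2_props:
  fixes X C :: "'a::euclidean_space set"
  assumes X: "finite X" "X \<noteq> {}" and C: "finite C" "C \<noteq> {}"
  shows "set_pmf (d2_sample X C) \<subseteq> X"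
    and "\<And>x. x \<in> X \<Longrightarrow> pmf (d2_sample X C) x =
            (if cost_set X C = 0 then 1 / real (card X) else cost x C / cost_set X C)"
proof -
  have S0: "cost_set X C \<ge> 0" by (rule cost_set_nonneg[OF C])
  have "set_pmf (d2_sample X C) \<subseteq> X \<and> (\<forall>x\<in>X. pmf (d2_sample X C) x =
            (if cost_set X C = 0 then 1 / real (card X) else cost x C / cost_set X C))"
  proof (cases "cost_set X C = 0")
    case True
    thus ?thesis using X by (simp add: d2_sample_def)
  next
    case False
    define f where "f = (\<lambda>x. if x \<in> X then cost x C / cost_set X C else 0)"
    have nn: "\<And>x. 0 \<le> f x" unfolding f_def using S0 cost_nonneg[OF C] by auto
    have "(\<integral>\<^sup>+x. ennreal (f x) \<partial>count_space UNIV) = (\<Sum>x\<in>X. ennreal (f x))"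
      by (rule nn_integral_count_space'[OF X(1)]) (auto simp: f_def)
    also have "\<dots> = ennreal (\<Sum>x\<in>X. f x)" using nn by simp
    also have "(\<Sum>x\<in>X. f x) = (\<Sum>x\<in>X. cost x C) / cost_set X C"
      unfolding f_def by (simp add: sum_divide_distrib)
    also have "\<dots> = 1" using False by (simp add: cost_set_def)
    finally have pr: "(\<integral>\<^sup>+x. ennreal (f x) \<partial>count_space UNIV) = 1" by simp
    have d: "d2_sample X C = embed_pmf f" using False by (simp add: d2_sample_def f_def)
    show ?thesis
      unfolding d using pmf_embed_pmf[OF nn pr] set_embed_pmf[OF nn pr]
      by (auto simp: f_def False)
  qed
  thus "set_pmf (d2_sample X C) \<subseteq> X"
    and "\<And>x. x \<in> X \<Longrightarrow> pmf (d2_sample X C) x =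
            (if cost_set X C = 0 then 1 / real (card X) else cost x C / cost_set X C)" by auto
qed

lemma d2_expect:
  fixes X C :: "'a::euclidean_space set"
  assumes X: "finite X" "X \<noteq> {}" and C: "finite C" "C \<noteq> {}"
  shows "measure_pmf.expectation (d2_sample X C) g = (\<Sum>x\<in>X. pmf (d2_sample X C) x * g x)"
  using d2_props(1)[OF assms] by (subst integral_measure_pmf_real[OF X(1)]) (auto simp: mult.commute)

lemma d2_sum:
  fixes X C :: "'a::euclidean_space set"
  assumes X: "finite X" "X \<noteq> {}" and C: "finite C" "C \<noteq> {}"
  shows "(\<Sum>x\<in>X. pmf (d2_sample X C) x) = 1"
proof (cases "cost_set X C = 0")
  case True
  thus ?thesis using d2_props(2)[OF assms] X by simp
next
  case False
  have "(\<Sum>x\<in>X. pmf (d2_sample X C) x) = (\<Sum>x\<in>X. cost x C / cost_set X C)"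
    using d2_props(2)[OF assms] False by simp
  also have "\<dots> = 1" using False by (simp add: sum_divide_distrib[symmetric] cost_set_def)
  finally show ?thesis .
qed

lemma Htilde_cluster_step:
  fixes X A :: "'a::euclidean_space set"
  assumes X: "finite X" "X \<noteq> {}" and AX: "A \<subseteq> X" and h: "h \<noteq> []" "set h \<subseteq> X"
  shows "(\<Sum>x\<in>X. pmf (d2_sample X (set h)) x * Htilde_cluster (h @ [x]) A) \<le> Htilde_cluster h A"
proof -
  let ?C = "set h"
  have C: "finite ?C" "?C \<noteq> {}" using h by auto
  let ?p = "\<lambda>x. pmf (d2_sample X ?C) x"
  have sp: "(\<Sum>x\<in>X. ?p x) = 1" by (rule d2_sum[OF X C])
  have A: "finite A" using AX X finite_subset by blast
  show ?thesis
  proof (cases "A \<inter> ?C = {}")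
    case False
    have "(\<Sum>x\<in>X. ?p x * Htilde_cluster (h @ [x]) A) = (\<Sum>x\<in>X. ?p x) * Htilde_cluster h A"
      using False by (simp add: Htilde_cluster_snoc sum_distrib_right)
    thus ?thesis using sp by simp
  next
    case True
    let ?O = "5 * OPT 1 A"
    have H0: "Htilde_cluster h A = ?O" using True by (simp add: Htilde_cluster_def)
    have "(\<Sum>x\<in>X. ?p x * Htilde_cluster (h @ [x]) A)
        = (\<Sum>x\<in>X. ?p x * ?O + (if x \<in> A then ?p x * (cost_set A (insert x ?C) - ?O) else 0))"
      using True by (intro sum.cong) (auto simp: Htilde_cluster_snoc H0 algebra_simps)
    also have "\<dots> = ?O + (\<Sum>x\<in>A. ?p x * (cost_set A (insert x ?C) - ?O))"
    proof -
      have "(\<Sum>x\<in>X. (if x \<in> A then ?p x * (cost_set A (insert x ?C) - ?O) else 0))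
          = (\<Sum>x\<in>X \<inter> A. ?p x * (cost_set A (insert x ?C) - ?O))"
        by (rule sum.inter_restrict[symmetric, OF X(1)])
      also have "X \<inter> A = A" using AX by blast
      finally show ?thesis using sp by (simp add: sum.distrib sum_distrib_right[symmetric])
    qed
    also have "\<dots> \<le> ?O + 0"
    proof -
      have "(\<Sum>x\<in>A. ?p x * (cost_set A (insert x ?C) - ?O)) \<le> 0"
      proof (cases "cost_set X ?C = 0")
        case S0: True
        have "A = {}"
        proof (rule ccontr)
          assume "A \<noteq> {}"
          then obtain x where x: "x \<in> A" by blast
          have "\<forall>y\<in>X. cost y ?C = 0"
            using S0 unfolding cost_set_def
            by (subst sum_nonneg_eq_0_iff[symmetric]) (auto simp: X cost_nonneg[OF C])
          hence "x \<in> ?C" using x AX cost_zero[OF C] by blast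
          thus False using True x by blast
        qed
        thus ?thesis by simp
      next
        case S0: False
        have S: "cost_set X ?C > 0" using S0 cost_set_nonneg[OF C, of X] by simp
        have "(\<Sum>x\<in>A. ?p x * (cost_set A (insert x ?C) - ?O))
            = (\<Sum>x\<in>A. cost x ?C * cost_set A (insert x ?C) - ?O * cost x ?C) / cost_set X ?C"
        proof -
          have "(\<Sum>x\<in>A. ?p x * (cost_set A (insert x ?C) - ?O))
              = (\<Sum>x\<in>A. (cost x ?C * cost_set A (insert x ?C) - ?O * cost x ?C) / cost_set X ?C)"
          proof (rule sum.cong[OF refl])
            fix x assume "x \<in> A" hence "x \<in> X" using AX by blast
            hence "?p x = cost x ?C / cost_set X ?C" using d2_props(2)[OF X C] S0 by simp
            thus "?p x * (cost_set A (insert x ?C) - ?O)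
                = (cost x ?C * cost_set A (insert x ?C) - ?O * cost x ?C) / cost_set X ?C"
              by (simp add: diff_divide_distrib algebra_simps)
          qed
          thus ?thesis by (simp add: sum_divide_distrib)
        qed
        also have "\<dots> \<le> 0"
        proof -
          have "(\<Sum>x\<in>A. cost x ?C * cost_set A (insert x ?C) - ?O * cost x ?C) \<le> 0"
            using key_lemma[OF A C] by (simp add: sum_subtractf sum_distrib_left)
          thus ?thesis using S by (simp add: divide_nonpos_pos)
        qed
        finally show ?thesis .
      qed
      thus ?thesis by simp
    qed
    finally show ?thesis using H0 by simp
  qed
qed



lemma expect_sum_finite:
  assumes "finite A" "set_pmf p \<subseteq> A"
  shows "measure_pmf.expectation p g = (\<Sum>x\<in>A. pmf p x * g x)"
  using assms by (subst integral_measure_pmf_real[OF assms(1)]) (auto simp: mult.commute)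

lemma expect_mono_finite:
  fixes f g :: "'b \<Rightarrow> real"
  assumes "finite (set_pmf p)" "\<And>x. x \<in> set_pmf p \<Longrightarrow> f x \<le> g x"
  shows "measure_pmf.expectation p f \<le> measure_pmf.expectation p g"
proof -
  have "(\<Sum>x\<in>set_pmf p. pmf p x * f x) \<le> (\<Sum>x\<in>set_pmf p. pmf p x * g x)"
    by (intro sum_mono mult_left_mono assms(2) pmf_nonneg)
  thus ?thesis by (simp only: expect_sum_finite[OF assms(1) order_refl])
qed

lemma expect_bind_finite:
  fixes g :: "'c \<Rightarrow> real"
  assumes fp: "finite (set_pmf p)" and ff: "\<And>x. x \<in> set_pmf p \<Longrightarrow> finite (set_pmf (f x))"
  shows "measure_pmf.expectation (bind_pmf p f) g = measure_pmf.expectation p (\<lambda>x. measure_pmf.expectation (f x) g)"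
proof -
  define B where "B = (\<Union>x\<in>set_pmf p. set_pmf (f x))"
  have B: "finite B" unfolding B_def using fp ff by auto
  have "measure_pmf.expectation (bind_pmf p f) g = (\<Sum>y\<in>B. pmf (bind_pmf p f) y * g y)"
    by (rule expect_sum_finite[OF B]) (auto simp: B_def)
  also have "\<dots> = (\<Sum>y\<in>B. (\<Sum>x\<in>set_pmf p. pmf p x * pmf (f x) y) * g y)"
  proof (intro sum.cong refl arg_cong2[where f="(*)"])
    fix y show "pmf (bind_pmf p f) y = (\<Sum>x\<in>set_pmf p. pmf p x * pmf (f x) y)"
      unfolding pmf_bind by (rule expect_sum_finite[OF fp order_refl])
  qed
  also have "\<dots> = (\<Sum>y\<in>B. \<Sum>x\<in>set_pmf p. pmf p x * (pmf (f x) y * g y))"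
    by (simp only: sum_distrib_right mult.assoc)
  also have "\<dots> = (\<Sum>x\<in>set_pmf p. \<Sum>y\<in>B. pmf p x * (pmf (f x) y * g y))"
    by (rule sum.swap)
  also have "\<dots> = (\<Sum>x\<in>set_pmf p. pmf p x * (\<Sum>y\<in>B. pmf (f x) y * g y))"
    by (simp only: sum_distrib_left)
  also have "\<dots> = (\<Sum>x\<in>set_pmf p. pmf p x * measure_pmf.expectation (f x) g)"
    by (intro sum.cong refl arg_cong2[where f="(*)"] expect_sum_finite[OF B, symmetric]) (auto simp: B_def)
  also have "\<dots> = measure_pmf.expectation p (\<lambda>x. measure_pmf.expectation (f x) g)"
    by (rule expect_sum_finite[OF fp order_refl, symmetric])
  finally show ?thesis .
qed

lemma kmpp_support:
  fixes X :: "'a::euclidean_space set"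
  assumes X: "finite X" "X \<noteq> {}"
  shows "h \<in> set_pmf (kmpp X (Suc n)) \<Longrightarrow> set h \<subseteq> X \<and> length h = Suc n"
proof (induction n arbitrary: h)
  case 0
  thus ?case using X by auto
next
  case (Suc n)
  from Suc.prems obtain h' where h': "h' \<in> set_pmf (kmpp X (Suc n))"
    and hh: "h \<in> set_pmf (kmpp_step X h')" by auto
  have IH: "set h' \<subseteq> X \<and> length h' = Suc n" using Suc.IH[OF h'] .
  hence C: "finite (set h')" "set h' \<noteq> {}" by auto
  obtain x where x: "x \<in> set_pmf (d2_sample X (set h'))" and hx: "h = h' @ [x]"
    using hh by (auto simp: kmpp_step_def)
  have "x \<in> X" using d2_props(1)[OF X C] x by blast
  thus ?case using IH hx by auto
qed

lemma kmpp_finite: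
  fixes X :: "'a::euclidean_space set"
  assumes X: "finite X" "X \<noteq> {}"
  shows "finite (set_pmf (kmpp X t))"
proof (cases t)
  case 0 thus ?thesis by simp
next
  case (Suc n)
  have "set_pmf (kmpp X t) \<subseteq> {xs. set xs \<subseteq> X \<and> length xs = Suc n}"
    using kmpp_support[OF X] Suc by blast
  thus ?thesis using finite_lists_length_eq[OF X(1)] finite_subset by blast
qed

lemma kmpp_step_finite:
  fixes X :: "'a::euclidean_space set"
  assumes X: "finite X" "X \<noteq> {}" and h: "h \<noteq> []"
  shows "finite (set_pmf (kmpp_step X h))"
proof -
  have C: "finite (set h)" "set h \<noteq> {}" using h by auto
  have "finite (set_pmf (d2_sample X (set h)))" using d2_props(1)[OF X C] X finite_subset by blast
  thus ?thesis by (simp add: kmpp_step_def)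
qed


lemma OPT1_le: "OPT 1 A \<le> cost_set A {z}"
  unfolding OPT_def
proof (rule cINF_lower)
  show "bdd_below ((\<lambda>C. cost_set A C) ` {C. finite C \<and> card C = 1})"
  proof (rule bdd_belowI[of _ 0])
    fix y assume "y \<in> (\<lambda>C. cost_set A C) ` {C. finite C \<and> card C = 1}"
    then obtain C where "C \<in> {C. finite C \<and> card C = (1::nat)}" "y = cost_set A C" by blast
    thus "0 \<le> y" by (auto simp: card_1_singleton_iff cost_set_singleton intro!: sum_nonneg)
  qed
qed simp

lemma sum_OPT1_le:
  fixes X :: "'a::euclidean_space set"
  assumes X: "finite X" and k: "k \<ge> 1" and oc: "opt_clustering X k P"
  shows "(\<Sum>i<k. OPT 1 (P i)) \<le> OPT k X" and "0 \<le> OPT k X"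
proof -
  from oc obtain c where disj: "\<forall>i<k. \<forall>j<k. i \<noteq> j \<longrightarrow> P i \<inter> P j = {}"
    and un: "(\<Union>i<k. P i) = X" and copt: "cost_set X (c ` {..<k}) = OPT k X"
    and near: "\<forall>i<k. \<forall>x\<in>P i. (norm (x - c i))\<^sup>2 = cost x (c ` {..<k})"
    unfolding opt_clustering_def by blast
  let ?Cs = "c ` {..<k}"
  have "0 \<in> {..<k}" using k by simp
  hence Cs: "finite ?Cs" "?Cs \<noteq> {}" by blast+
  have Pf: "finite (P i)" if "i < k" for i
  proof -
    have "P i \<subseteq> X" using un that by blast
    thus ?thesis using X finite_subset by blast
  qed
  have "(\<Sum>i<k. OPT 1 (P i)) \<le> (\<Sum>i<k. cost_set (P i) {c i})"
    by (intro sum_mono OPT1_le)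
  also have "\<dots> = (\<Sum>i<k. \<Sum>x\<in>P i. cost x ?Cs)"
    using near by (intro sum.cong refl) (simp add: cost_set_singleton)
  also have "\<dots> = (\<Sum>x\<in>(\<Union>i<k. P i). cost x ?Cs)"
    by (rule sum.UNION_disjoint[symmetric]) (use Pf disj in auto)
  also have "\<dots> = OPT k X" using un copt by (simp add: cost_set_def)
  finally show "(\<Sum>i<k. OPT 1 (P i)) \<le> OPT k X" .
  show "0 \<le> OPT k X" using copt cost_set_nonneg[OF Cs, of X] by simp
qed

lemma first_step_cluster:
  fixes X A :: "'a::euclidean_space set"
  assumes X: "finite X" and AX: "A \<subseteq> X"
  shows "(\<Sum>x\<in>X. Htilde_cluster [x] A) \<le> real (card X) * (5 * OPT 1 A)"
proof -
  have A: "finite A" using AX X finite_subset by blast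
  define Ov where "Ov = 5 * OPT 1 A"
  have hc: "Htilde_cluster [x] A = (if x \<in> A then cost_set A {x} else Ov)" for x
  proof -
    have "Htilde_cluster [] A = Ov" by (simp add: Htilde_cluster_def Ov_def)
    moreover have "Htilde_cluster [x] A = Htilde_cluster ([] @ [x]) A" by simp
    ultimately show ?thesis by (simp only: Htilde_cluster_snoc) simp
  qed
  have "(\<Sum>x\<in>X. Htilde_cluster [x] A) = (\<Sum>x\<in>X. Ov + (if x \<in> A then cost_set A {x} - Ov else 0))"
    by (intro sum.cong refl) (simp add: hc)
  also have "\<dots> = real (card X) * Ov + (\<Sum>x\<in>X \<inter> A. cost_set A {x} - Ov)"
  proof -
    have "(\<Sum>x\<in>X. Ov + (if x \<in> A then cost_set A {x} - Ov else 0))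
        = (\<Sum>x\<in>X. Ov) + (\<Sum>x\<in>X. (if x \<in> A then cost_set A {x} - Ov else 0))"
      by (rule sum.distrib)
    also have "(\<Sum>x\<in>X. (if x \<in> A then cost_set A {x} - Ov else 0)) = (\<Sum>x\<in>X \<inter> A. cost_set A {x} - Ov)"
      by (rule sum.inter_restrict[symmetric, OF X])
    finally show ?thesis by simp
  qed
  also have "X \<inter> A = A" using AX by blast
  finally have eq: "(\<Sum>x\<in>X. Htilde_cluster [x] A) = real (card X) * Ov + (\<Sum>x\<in>A. cost_set A {x} - Ov)" .
  have neg: "(\<Sum>x\<in>A. cost_set A {x} - Ov) \<le> 0"
  proof (cases "A = {}")
    case True thus ?thesis by simp
  next
    case False
    let ?m = "centroid A"
    let ?R = "\<Sum>y\<in>A. (norm (y - ?m))\<^sup>2"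
    have "(\<Sum>x\<in>A. cost_set A {x}) = (\<Sum>x\<in>A. ?R + real (card A) * (norm (x - ?m))\<^sup>2)"
    proof (intro sum.cong refl)
      fix x show "cost_set A {x} = ?R + real (card A) * (norm (x - ?m))\<^sup>2"
        unfolding cost_set_singleton by (rule sum_sq_dist_centroid[OF A False])
    qed
    also have "\<dots> = 2 * real (card A) * ?R" by (simp add: sum.distrib sum_distrib_left[symmetric])
    also have "\<dots> \<le> 2 * real (card A) * OPT 1 A"
      using centroid_le_OPT1[OF A] by (intro mult_left_mono) auto
    also have "\<dots> \<le> real (card A) * Ov" using OPT1_nonneg[of A] by (simp add: Ov_def)
    finally have "(\<Sum>x\<in>A. cost_set A {x}) \<le> real (card A) * Ov" .
    thus ?thesis by (simp add: sum_subtractf)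
  qed
  show ?thesis using eq neg by (simp add: Ov_def)
qed


theorem mainTheorem6:
  fixes X :: "'a::euclidean_space set" and k :: nat and P :: "nat \<Rightarrow> 'a set"
  assumes "finite X" and "X \<noteq> {}" and "k \<ge> 1" and "opt_clustering X k P"
  shows "(\<forall>t\<ge>1. \<forall>h\<in>set_pmf (kmpp X t).
            measure_pmf.expectation (kmpp_step X h) (Htilde k P) \<le> Htilde k P h)
       \<and> (\<forall>t. (\<Sum>i<k. measure_pmf.expectation (kmpp X t)
                 (\<lambda>h. if P i \<inter> set h \<noteq> {} then cost_set (P i) (set h) else 0))
              \<le> 5 * OPT k X)"
proof -
  note X = assms(1,2)
  have PX: "\<And>i. i < k \<Longrightarrow> P i \<subseteq> X" using assms(4) unfolding opt_clustering_def by blast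
  have step: "measure_pmf.expectation (kmpp_step X h) (Htilde k P) \<le> Htilde k P h"
    if h: "h \<noteq> []" "set h \<subseteq> X" for h
  proof -
    have C: "finite (set h)" "set h \<noteq> {}" using h by auto
    have "measure_pmf.expectation (kmpp_step X h) (Htilde k P)
        = measure_pmf.expectation (d2_sample X (set h)) (\<lambda>x. Htilde k P (h @ [x]))"
      by (simp add: kmpp_step_def)
    also have "\<dots> = (\<Sum>x\<in>X. pmf (d2_sample X (set h)) x * Htilde k P (h @ [x]))"
      by (rule d2_expect[OF X C])
    also have "\<dots> = (\<Sum>i<k. \<Sum>x\<in>X. pmf (d2_sample X (set h)) x * Htilde_cluster (h @ [x]) (P i))"
      by (simp add: Htilde_def sum_distrib_left sum.swap[of _ X])
    also have "\<dots> \<le> (\<Sum>i<k. Htilde_cluster h (P i))"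
      by (intro sum_mono Htilde_cluster_step[OF X PX h]) simp
    also have "\<dots> = Htilde k P h" by (simp add: Htilde_def)
    finally show ?thesis .
  qed
  have part1: "\<forall>t\<ge>1. \<forall>h\<in>set_pmf (kmpp X t).
            measure_pmf.expectation (kmpp_step X h) (Htilde k P) \<le> Htilde k P h"
  proof (intro allI impI ballI)
    fix t h assume t: "1 \<le> t" and h: "h \<in> set_pmf (kmpp X t)"
    obtain n where n: "t = Suc n" using t by (cases t) auto
    have "set h \<subseteq> X \<and> length h = Suc n" using kmpp_support[OF X] h n by blast
    thus "measure_pmf.expectation (kmpp_step X h) (Htilde k P) \<le> Htilde k P h"
      by (intro step) auto
  qed
  have EH: "measure_pmf.expectation (kmpp X (Suc n)) (Htilde k P) \<le> 5 * (\<Sum>i<k. OPT 1 (P i))" for n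
  proof (induction n)
    case 0
    have "measure_pmf.expectation (kmpp X (Suc 0)) (Htilde k P)
        = (\<Sum>x\<in>X. Htilde k P [x]) / real (card X)"
      by (simp add: integral_pmf_of_set[OF X(2) X(1)])
    also have "\<dots> = (\<Sum>i<k. (\<Sum>x\<in>X. Htilde_cluster [x] (P i))) / real (card X)"
      by (simp add: Htilde_def sum.swap[of _ X])
    also have "\<dots> \<le> (\<Sum>i<k. real (card X) * (5 * OPT 1 (P i))) / real (card X)"
      using X by (intro divide_right_mono sum_mono first_step_cluster PX) auto
    also have "\<dots> = 5 * (\<Sum>i<k. OPT 1 (P i))"
      using X by (simp add: sum_distrib_left[symmetric])
    finally show ?case .
  next
    case (Suc n)
    have "measure_pmf.expectation (kmpp X (Suc (Suc n))) (Htilde k P)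
        = measure_pmf.expectation (kmpp X (Suc n)) (\<lambda>h. measure_pmf.expectation (kmpp_step X h) (Htilde k P))"
    proof -
      have "measure_pmf.expectation (kmpp X (Suc (Suc n))) (Htilde k P)
          = measure_pmf.expectation (bind_pmf (kmpp X (Suc n)) (kmpp_step X)) (Htilde k P)" by simp
      also have "\<dots> = measure_pmf.expectation (kmpp X (Suc n)) (\<lambda>h. measure_pmf.expectation (kmpp_step X h) (Htilde k P))"
      proof (rule expect_bind_finite[OF kmpp_finite[OF X]])
        fix h assume "h \<in> set_pmf (kmpp X (Suc n))"
        hence "length h = Suc n" using kmpp_support[OF X] by blast
        thus "finite (set_pmf (kmpp_step X h))" by (intro kmpp_step_finite[OF X]) auto
      qed
      finally show ?thesis .
    qed
    also have "\<dots> \<le> measure_pmf.expectation (kmpp X (Suc n)) (Htilde k P)"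
      by (rule expect_mono_finite[OF kmpp_finite[OF X]]) (use part1 in auto)
    finally show ?case using Suc.IH by linarith
  qed
  have part2: "(\<Sum>i<k. measure_pmf.expectation (kmpp X t)
                 (\<lambda>h. if P i \<inter> set h \<noteq> {} then cost_set (P i) (set h) else 0))
              \<le> 5 * OPT k X" for t
  proof (cases t)
    case 0
    thus ?thesis using sum_OPT1_le(2)[OF X(1) assms(3,4)] by simp
  next
    case (Suc n)
    have fin: "finite (set_pmf (kmpp X t))" by (rule kmpp_finite[OF X])
    have "(\<Sum>i<k. measure_pmf.expectation (kmpp X t)
                 (\<lambda>h. if P i \<inter> set h \<noteq> {} then cost_set (P i) (set h) else 0))
        = measure_pmf.expectation (kmpp X t)
                 (\<lambda>h. \<Sum>i<k. if P i \<inter> set h \<noteq> {} then cost_set (P i) (set h) else 0)"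
      by (rule Bochner_Integration.integral_sum[symmetric]) (rule integrable_measure_pmf_finite[OF fin])
    also have "\<dots> \<le> measure_pmf.expectation (kmpp X t) (Htilde k P)"
    proof (rule expect_mono_finite[OF fin])
      fix h assume "h \<in> set_pmf (kmpp X t)"
      show "(\<Sum>i<k. if P i \<inter> set h \<noteq> {} then cost_set (P i) (set h) else 0) \<le> Htilde k P h"
        unfolding Htilde_def
        by (intro sum_mono) (auto intro: Htilde_cluster_covered_ge Htilde_cluster_nonneg)
    qed
    also have "\<dots> \<le> 5 * (\<Sum>i<k. OPT 1 (P i))" using EH Suc by simp
    also have "\<dots> \<le> 5 * OPT k X" using sum_OPT1_le(1)[OF X(1) assms(3,4)] by simp
    finally show ?thesis .
  qed
  show ?thesis using part1 part2 by blast
qed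

end
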